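(* Suppose that $\mathcal{L} = L\mathbb{Z}^{2d} \subseteq \mathbb{R}^{2d}$ is a lattice whose generating matrix has rational entries, $L \in \mathrm{GL}_{2d}(\mathbb{Q})$. Then for every real-valued window function $g \in L^2(\mathbb{R}^d,\mathbb{R})$ there exist two real-valued functions $f_1,f_2 \in L^2(\mathbb{R}^d,\mathbb{R})$ such that $|V_g f_1(z)| = |V_g f_2(z)|$ for all $z \in \mathcal{L}$ and there is no $\nu\in\mathbb{C}$ with $|\nu|=1$ and $f_1=\nu f_2$.
   Context: $V_gf(x,\omega)=\int_{\mathbb{R}^d} f(t)\overline{g(t-x)}e^{-2\pi i \omega\cdot t}\,dt$ is the short-time Fourier transform. $L^2(\mathbb{R}^d,\mathbb{R})$ denotes the real-valued functions in $L^2(\mathbb{R}^d)$. *)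

theory Defs
  imports "HOL-Analysis.Analysis"
begin

definition stft :: "(real^'n \<Rightarrow> complex) \<Rightarrow> (real^'n \<Rightarrow> complex) \<Rightarrow> real^'n \<Rightarrow> real^'n \<Rightarrow> complex" where
  "stft g f x w = (LINT t|lebesgue. f t * cnj (g (t - x)) * exp (- 2 * complex_of_real pi * \<i> * complex_of_real (w \<bullet> t)))"

definition L2_real :: "(real^'n \<Rightarrow> real) \<Rightarrow> bool" where
  "L2_real f \<longleftrightarrow> f \<in> borel_measurable lebesgue \<and> integrable lebesgue (\<lambda>t. (f t)\<^sup>2)"

definition xpart :: "real^('n + 'n) \<Rightarrow> real^'n" where
  "xpart z = (\<chi> i. z $ Inl i)"

definition wpart :: "real^('n + 'n) \<Rightarrow> real^'n" where
  "wpart z = (\<chi> i. z $ Inr i)"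

end

theory Submission
  imports Defs
begin


lemma aff_eq:
  fixes a :: "'a::euclidean_space"
  shows "(\<lambda>x. a + (\<Sum>j\<in>Basis. (c * (x \<bullet> j)) *\<^sub>R j)) = (\<lambda>y. a + c *\<^sub>R y)"
  unfolding scaleR_scaleR[symmetric] scaleR_sum_right[symmetric] euclidean_representation by (rule refl)

lemma aff_meas:
  fixes a :: "'a::euclidean_space"
  assumes "c \<noteq> 0"
  shows "(\<lambda>y. a + c *\<^sub>R y) \<in> lebesgue \<rightarrow>\<^sub>M lebesgue"
  using lebesgue_affine_measurable[of "\<lambda>_. c" a] assms by (simp add: aff_eq)

lemma aff_distr:
  fixes a :: "'a::euclidean_space"
  assumes "c = 1 \<or> c = -1"
  shows "distr lebesgue lebesgue (\<lambda>y. a + c *\<^sub>R y) = lebesgue"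
proof -
  have c0: "\<And>j. j \<in> (Basis::'a set) \<Longrightarrow> c \<noteq> 0" using assms by auto
  have c1: "\<bar>c\<bar> = 1" using assms by auto
  have "lebesgue = density (distr lebesgue lebesgue (\<lambda>x. a + (\<Sum>j\<in>Basis. (c * (x \<bullet> j)) *\<^sub>R j))) (\<lambda>_. (\<Prod>j\<in>(Basis::'a set). \<bar>c\<bar>))"
    by (rule lebesgue_affine_euclidean[of "\<lambda>_. c" a, OF c0])
  also have "(\<lambda>_::'a. (\<Prod>j\<in>(Basis::'a set). \<bar>c\<bar>)) = (\<lambda>_. 1)" unfolding c1 by simp
  finally have "lebesgue = density (distr lebesgue lebesgue (\<lambda>y. a + c *\<^sub>R y)) (\<lambda>_. 1)" unfolding aff_eq ennreal_1 .
  then show ?thesis by (metis density_1)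
qed

lemma refl_meas: "(\<lambda>y. a - y) \<in> lebesgue \<rightarrow>\<^sub>M (lebesgue :: 'a::euclidean_space measure)"
  using aff_meas[of "-1" a] by simp
lemma refl_distr: "distr lebesgue lebesgue (\<lambda>y. a - y) = (lebesgue :: 'a::euclidean_space measure)"
  using aff_distr[of "-1" a] by simp
lemma tr_meas: "(\<lambda>y. y - a) \<in> lebesgue \<rightarrow>\<^sub>M (lebesgue :: 'a::euclidean_space measure)"
  using aff_meas[of "1" "-a"] by simp
lemma tr_distr: "distr lebesgue lebesgue (\<lambda>y. y - a) = (lebesgue :: 'a::euclidean_space measure)"
  using aff_distr[of "1" "-a"] by simp

lemma integral_refl:
  fixes F :: "'a::euclidean_space \<Rightarrow> complex"
  assumes "F \<in> borel_measurable lebesgue"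
  shows "integral\<^sup>L lebesgue F = integral\<^sup>L lebesgue (\<lambda>t. F (a - t))"
proof -
  have "integral\<^sup>L lebesgue F = integral\<^sup>L (distr lebesgue lebesgue (\<lambda>y. a - y)) F"
    by (simp add: refl_distr)
  also have "\<dots> = integral\<^sup>L lebesgue (\<lambda>t. F (a - t))"
    by (rule integral_distr[OF refl_meas assms])
  finally show ?thesis .
qed

lemma AE_refl:
  fixes g :: "'a::euclidean_space \<Rightarrow> real"
  assumes "g \<in> borel_measurable lebesgue" "AE t in lebesgue. g (a - t) = 0"
  shows "AE t in lebesgue. g t = 0"
proof -
  have ms: "{x \<in> space lebesgue. g x = 0} \<in> sets lebesgue" using assms(1) by measurable
  have "AE t in distr lebesgue lebesgue (\<lambda>y. a - y). g t = 0"
    using assms(2) by (subst AE_distr_iff[OF refl_meas ms])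
  then show ?thesis by (metis refl_distr)
qed

lemma AE_tr:
  fixes g :: "'a::euclidean_space \<Rightarrow> real"
  assumes "g \<in> borel_measurable lebesgue" "AE t in lebesgue. g t = 0"
  shows "AE t in lebesgue. g (t - a) = 0"
proof -
  have ms: "{x \<in> space lebesgue. g x = 0} \<in> sets lebesgue" using assms(1) by measurable
  have "AE t in distr lebesgue lebesgue (\<lambda>y. y - a). g t = 0"
    using assms(2) by (subst tr_distr)
  then show ?thesis by (subst (asm) AE_distr_iff[OF tr_meas ms])
qed

lemma integrable_refl:
  fixes F :: "'a::euclidean_space \<Rightarrow> real"
  assumes "F \<in> borel_measurable lebesgue" "integrable lebesgue F"
  shows "integrable lebesgue (\<lambda>t. F (a - t))"
proof -
  have "integrable (distr lebesgue lebesgue (\<lambda>y. a - y)) F" using assms by (simp add: refl_distr)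
  then show ?thesis by (subst (asm) integrable_distr_eq[OF refl_meas assms(1)])
qed


lemma cont_meas:
  fixes h :: "'a::euclidean_space \<Rightarrow> 'b::euclidean_space"
  assumes "continuous_on UNIV h" shows "h \<in> borel_measurable lebesgue"
proof -
  have "h \<in> borel_measurable lborel" using borel_measurable_continuous_onI[OF assms] by simp
  then show ?thesis by (rule measurable_completion)
qed

lemma mI:
  fixes f1 g :: "real^'n \<Rightarrow> real"
  assumes m1: "f1 \<in> borel_measurable lebesgue" and mg: "g \<in> borel_measurable lebesgue"
  shows "(\<lambda>t. complex_of_real (f1 t) * cnj (complex_of_real (g (t - x))) * exp (- 2 * complex_of_real pi * \<i> * complex_of_real (w \<bullet> t))) \<in> borel_measurable lebesgue"
proof -
  have mgx: "(\<lambda>t. g (t - x)) \<in> borel_measurable lebesgue"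
    using measurable_compose[OF tr_meas mg] by simp
  have a: "(\<lambda>t. complex_of_real (f1 t)) \<in> borel_measurable lebesgue"
    using measurable_compose[OF m1 borel_measurable_of_real] by simp
  have b: "(\<lambda>t. cnj (complex_of_real (g (t - x)))) \<in> borel_measurable lebesgue"
    using measurable_compose[OF mgx borel_measurable_of_real] by simp
  have c: "(\<lambda>t. exp (- 2 * complex_of_real pi * \<i> * complex_of_real (w \<bullet> t))) \<in> borel_measurable lebesgue"
    by (intro cont_meas continuous_intros)
  show ?thesis by (intro borel_measurable_times a b c)
qed

lemma stft_rel:
  fixes f1 f2 g :: "real^'n \<Rightarrow> real"
  assumes m1: "f1 \<in> borel_measurable lebesgue" and mg: "g \<in> borel_measurable lebesgue"
    and rel: "\<And>t. f1 (x - t) * g (- t) = f2 t * g (t - x)"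
  shows "cmod (stft (\<lambda>t. complex_of_real (g t)) (\<lambda>t. complex_of_real (f1 t)) x w)
       = cmod (stft (\<lambda>t. complex_of_real (g t)) (\<lambda>t. complex_of_real (f2 t)) x w)"
proof -
  define E where "E = exp (- 2 * complex_of_real pi * \<i> * complex_of_real (w \<bullet> x))"
  define I where "I = (\<lambda>f t. complex_of_real (f t) * cnj (complex_of_real (g (t - x))) * exp (- 2 * complex_of_real pi * \<i> * complex_of_real (w \<bullet> t)))"
  have mgx: "(\<lambda>t. g (t - x)) \<in> borel_measurable lebesgue"
    using measurable_compose[OF tr_meas mg] by simp
  have mI: "I f1 \<in> borel_measurable lebesgue"
    unfolding I_def by (rule mI[OF m1 mg])
  have eq: "I f1 (x - t) = E * cnj (I f2 t)" for t
  proof -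
    have "exp (- 2 * complex_of_real pi * \<i> * complex_of_real (w \<bullet> (x - t)))
        = E * exp (2 * complex_of_real pi * \<i> * complex_of_real (w \<bullet> t))"
      unfolding E_def by (simp add: inner_diff_right exp_add[symmetric] algebra_simps)
    moreover have "cnj (exp (- 2 * complex_of_real pi * \<i> * complex_of_real (w \<bullet> t)))
        = exp (2 * complex_of_real pi * \<i> * complex_of_real (w \<bullet> t))"
      by (simp add: exp_cnj)
    moreover have "complex_of_real (f1 (x - t)) * complex_of_real (g (-t)) = complex_of_real (f2 t) * complex_of_real (g (t - x))"
      using rel[of t] by (metis of_real_mult)
    ultimately show ?thesis unfolding I_def
      by (simp add: algebra_simps)
  qed
  have "stft (\<lambda>t. complex_of_real (g t)) (\<lambda>t. complex_of_real (f1 t)) x w = integral\<^sup>L lebesgue (I f1)"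
    unfolding stft_def I_def by simp
  also have "\<dots> = integral\<^sup>L lebesgue (\<lambda>t. I f1 (x - t))" by (rule integral_refl[OF mI])
  also have "\<dots> = E * cnj (integral\<^sup>L lebesgue (I f2))" by (simp add: eq)
  finally have "stft (\<lambda>t. complex_of_real (g t)) (\<lambda>t. complex_of_real (f1 t)) x w =
      E * cnj (stft (\<lambda>t. complex_of_real (g t)) (\<lambda>t. complex_of_real (f2 t)) x w)"
    unfolding stft_def I_def by simp
  moreover have "cmod E = 1" unfolding E_def by (simp add: norm_exp_eq_Re)
  ultimately show ?thesis by (simp add: norm_mult)
qed

lemma pointwise:
  fixes a s :: real and \<nu> :: complex
  assumes "cmod \<nu> = 1" "complex_of_real ((1 + s) * a) = \<nu> * complex_of_real ((1 - s) * a)"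
  shows "a = 0 \<or> s = 0"
proof (rule ccontr)
  assume "\<not> (a = 0 \<or> s = 0)"
  then have a: "a \<noteq> 0" and s: "s \<noteq> 0" by auto
  have re: "(1 + s) * a = Re \<nu> * ((1 - s) * a)" using arg_cong[OF assms(2), of Re] by simp
  have im: "0 = Im \<nu> * ((1 - s) * a)" using arg_cong[OF assms(2), of Im] by simp
  have s1: "s \<noteq> 1" using re a by auto
  then have "Im \<nu> = 0" using im a by auto
  then have "\<bar>Re \<nu>\<bar> = 1" using assms(1) by (simp add: cmod_eq_Re)
  then have "Re \<nu> = 1 \<or> Re \<nu> = -1" by (auto simp: abs_if split: if_splits)
  then show False using re a s by (auto simp: algebra_simps)
qed


lemma cube_meas: "emeasure lebesgue (cbox (0::real^'n) One) = 1"
proof -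
  have "emeasure lebesgue (cbox (0::real^'n) One) = emeasure lborel (cbox (0::real^'n) One)"
    by (simp add: emeasure_completion)
  also have "\<dots> = 1" by (simp add: emeasure_lborel_cbox_eq inner_Basis)
  finally show ?thesis .
qed
lemma notAE: "\<not> (AE t in lebesgue. indicator (cbox (0::real^'n) One) t = (0::real))"
proof -
  have eqN: "{t \<in> space lebesgue. \<not> indicator (cbox (0::real^'n) One) t = (0::real)} = cbox 0 One"
    by (auto simp: indicator_def)
  have "(AE t in lebesgue. indicator (cbox (0::real^'n) One) t = (0::real)) \<longleftrightarrow> emeasure lebesgue (cbox (0::real^'n) One) = 0"
    by (rule AE_iff_measurable[OF _ eqN]) (simp add: fmeasurableD)
  then show ?thesis using cube_meas by simp
qed

lemma rat_den:
  fixes q :: "'a::finite \<Rightarrow> real"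
  assumes "\<And>j. q j \<in> \<rat>"
  shows "\<exists>N::nat. N > 0 \<and> (\<forall>j. real N * q j \<in> \<int>)"
proof -
  have "\<exists>d::nat. d > 0 \<and> real d * q j \<in> \<int>" for j
  proof -
    from assms[of j] obtain a b where b: "b > 0" and q: "q j = of_int a / of_int b"
      by (auto elim: Rats_cases')
    have "real (nat b) * q j = of_int a" using b q by simp
    then show ?thesis using b by (intro exI[of _ "nat b"]) auto
  qed
  then obtain D where D: "\<And>j. D j > (0::nat)" "\<And>j. real (D j) * q j \<in> \<int>" by metis
  define N where "N = (\<Prod>j\<in>UNIV. D j)"
  have "N > 0" unfolding N_def using D(1) by (simp add: prod_pos)
  moreover have "real N * q j \<in> \<int>" for j
  proof -
    have "N = D j * (\<Prod>j'\<in>UNIV - {j}. D j')" unfolding N_def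
      by (simp add: prod.remove)
    then have "real N * q j = real (\<Prod>j'\<in>UNIV - {j}. D j') * (real (D j) * q j)" by simp
    moreover have "real (\<Prod>j'\<in>UNIV - {j}. D j') * (real (D j) * q j) \<in> \<int>"
      by (intro Ints_mult Ints_of_nat D(2))
    ultimately show ?thesis by metis
  qed
  ultimately show ?thesis by blast
qed

lemma sin_AE:
  assumes "N > (0::nat)"
  shows "AE t in lebesgue. sin (2 * pi * real N * (t::real^'n) $ i) \<noteq> 0"
proof (rule AE_I')
  let ?F = "range (\<lambda>n::int. {t::real^'n. axis i 1 \<bullet> t = of_int n / (2 * real N)})"
  have "negligible (\<Union>?F)"
    by (rule negligible_countable_Union) (auto intro!: negligible_hyperplane simp: axis_eq_0_iff)
  then show "\<Union>?F \<in> null_sets lebesgue" by (simp add: negligible_iff_null_sets)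
  show "{t \<in> space lebesgue. \<not> sin (2 * pi * real N * t $ i) \<noteq> 0} \<subseteq> \<Union>?F"
  proof
    fix t :: "real^'n" assume "t \<in> {t \<in> space lebesgue. \<not> sin (2 * pi * real N * t $ i) \<noteq> 0}"
    then obtain n :: int where n: "2 * pi * real N * t $ i = of_int n * pi"
      by (auto simp: sin_zero_iff_int2)
    have "t $ i = of_int n / (2 * real N)" using n assms pi_gt_zero
      by (simp add: field_simps)
    then show "t \<in> \<Union>?F" by (auto simp: inner_axis')
  qed
qed

lemma L2_refl:
  fixes g :: "real^'n \<Rightarrow> real"
  assumes "L2_real g" shows "L2_real (\<lambda>t. g (- t))"
proof -
  have mg: "g \<in> borel_measurable lebesgue" and ig: "integrable lebesgue (\<lambda>t. (g t)\<^sup>2)"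
    using assms by (auto simp: L2_real_def)
  have "(\<lambda>t. g (0 - t)) \<in> borel_measurable lebesgue" by (rule measurable_compose[OF refl_meas mg])
  moreover have "integrable lebesgue (\<lambda>t. (g (0 - t))\<^sup>2)"
    using integrable_refl[OF borel_measurable_integrable[OF ig] ig, of 0] by simp
  ultimately show ?thesis by (simp add: L2_real_def)
qed

lemma L2_bounded:
  fixes h c :: "real^'n \<Rightarrow> real"
  assumes "L2_real h" "c \<in> borel_measurable lebesgue" "\<And>t. \<bar>c t\<bar> \<le> 2"
  shows "L2_real (\<lambda>t. c t * h t)"
proof -
  have mh: "h \<in> borel_measurable lebesgue" and ih: "integrable lebesgue (\<lambda>t. (h t)\<^sup>2)"
    using assms by (auto simp: L2_real_def)
  have m: "(\<lambda>t. c t * h t) \<in> borel_measurable lebesgue" using assms(2) mh by (rule borel_measurable_times)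
  have "integrable lebesgue (\<lambda>t. (c t * h t)\<^sup>2)"
  proof (rule Bochner_Integration.integrable_bound)
    show "integrable lebesgue (\<lambda>t. 4 * (h t)\<^sup>2)" using ih by simp
    show "(\<lambda>t. (c t * h t)\<^sup>2) \<in> borel_measurable lebesgue" using m by simp
    show "AE t in lebesgue. norm ((c t * h t)\<^sup>2) \<le> norm (4 * (h t)\<^sup>2)"
    proof (rule AE_I2)
      fix t
      have "\<bar>c t\<bar>\<^sup>2 \<le> 2\<^sup>2" using assms(3)[of t] by (intro power_mono) auto
      then have "(c t)\<^sup>2 \<le> 2\<^sup>2" by simp
      then have "(c t)\<^sup>2 * (h t)\<^sup>2 \<le> 4 * (h t)\<^sup>2" by (intro mult_right_mono) auto
      then show "norm ((c t * h t)\<^sup>2) \<le> norm (4 * (h t)\<^sup>2)" by (simp add: power_mult_distrib)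
    qed
  qed
  with m show ?thesis by (simp add: L2_real_def)
qed

lemma stft_zero:
  fixes f g :: "real^'n \<Rightarrow> real"
  assumes mg: "g \<in> borel_measurable lebesgue" and g0: "AE t in lebesgue. g t = 0"
  shows "stft (\<lambda>t. complex_of_real (g t)) (\<lambda>t. complex_of_real (f t)) x w = 0"
  unfolding stft_def
proof (rule integral_eq_zero_AE)
  show "AE t in lebesgue. complex_of_real (f t) * cnj (complex_of_real (g (t - x))) *
      exp (- 2 * complex_of_real pi * \<i> * complex_of_real (w \<bullet> t)) = 0"
    using AE_tr[OF mg g0, of x] by eventually_elim simp
qed

theorem theorem1p6:
  fixes L :: "real^('n::finite + 'n)^('n + 'n)"
    and g :: "real^'n \<Rightarrow> real"
  assumes "invertible L"
    and "\<forall>i j. L $ i $ j \<in> \<rat>"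
    and "L2_real g"
  shows "\<exists>f1 f2 :: real^'n \<Rightarrow> real. L2_real f1 \<and> L2_real f2 \<and>
           (\<forall>k :: real^('n + 'n). (\<forall>i. k $ i \<in> \<int>) \<longrightarrow>
              (let z = L *v k in
                 cmod (stft (\<lambda>t. complex_of_real (g t)) (\<lambda>t. complex_of_real (f1 t)) (xpart z) (wpart z))
               = cmod (stft (\<lambda>t. complex_of_real (g t)) (\<lambda>t. complex_of_real (f2 t)) (xpart z) (wpart z)))) \<and>
           \<not> (\<exists>\<nu>::complex. cmod \<nu> = 1 \<and>
                 (AE t in lebesgue. complex_of_real (f1 t) = \<nu> * complex_of_real (f2 t)))"
proof -
  have mg: "g \<in> borel_measurable lebesgue" using assms(3) by (simp add: L2_real_def)
  define i0 where "i0 = (undefined :: 'n)"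
  obtain N :: nat where N: "N > 0" "\<And>j. real N * L $ Inl i0 $ j \<in> \<int>"
    using rat_den[of "\<lambda>j. L $ Inl i0 $ j"] assms(2) by blast
  define s where "s = (\<lambda>t::real^'n. sin (2 * pi * real N * t $ i0))"
  have s_odd: "s (x - t) = - s t" if "real N * x $ i0 \<in> \<int>" for x t
  proof -
    from that obtain m where m: "real N * x $ i0 = of_int m" by (auto elim: Ints_cases)
    have "2 * pi * real N * (x - t) $ i0 = 2 * pi * of_int m - 2 * pi * real N * t $ i0"
      using m by (simp add: algebra_simps)
    then show ?thesis unfolding s_def by (simp add: sin_diff)
  qed
  have xint: "real N * xpart (L *v k) $ i0 \<in> \<int>" if "\<forall>i. k $ i \<in> \<int>" for k
  proof -
    have "real N * xpart (L *v k) $ i0 = (\<Sum>j\<in>UNIV. (real N * L $ Inl i0 $ j) * k $ j)"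
      by (simp add: xpart_def matrix_vector_mult_def sum_distrib_left mult.assoc)
    also have "\<dots> \<in> \<int>"
    proof (rule Ints_sum)
      fix j show "real N * L $ Inl i0 $ j * k $ j \<in> \<int>"
        by (rule Ints_mult[OF N(2)]) (use that in blast)
    qed
    finally show ?thesis .
  qed
  show ?thesis
  proof (cases "AE t in lebesgue. g t = 0")
    case True
    define f1 where "f1 = (indicator (cbox (0::real^'n) One) :: real^'n \<Rightarrow> real)"
    have "L2_real f1"
    proof -
      have cs: "cbox (0::real^'n) One \<in> sets lebesgue" by (simp add: fmeasurableD)
      have i1: "integrable lebesgue f1" unfolding f1_def
        using cs cube_meas by (intro integrable_real_indicator) auto
      have sq: "(\<lambda>t. (f1 t)\<^sup>2) = f1" by (auto simp: f1_def indicator_def)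
      show ?thesis unfolding L2_real_def sq using i1 borel_measurable_integrable[OF i1] by blast
    qed
    moreover have "L2_real (\<lambda>_::real^'n. 0)" by (simp add: L2_real_def)
    moreover have "\<And>x w. stft (\<lambda>t. complex_of_real (g t)) (\<lambda>t. 0) x w = 0"
      using stft_zero[OF mg True, of "\<lambda>_. 0"] by simp
    moreover have "\<And>x w. stft (\<lambda>t. complex_of_real (g t)) (\<lambda>t. complex_of_real (f1 t)) x w = 0"
      by (rule stft_zero[OF mg True])
    moreover have "\<not> (\<exists>\<nu>::complex. cmod \<nu> = 1 \<and>
                 (AE t in lebesgue. complex_of_real (f1 t) = \<nu> * complex_of_real 0))"
      using notAE[where 'n='n] unfolding f1_def by auto
    ultimately show ?thesis
      apply - apply (rule exI[of _ f1], rule exI[of _ "\<lambda>_. 0"]) by (simp add: Let_def)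
  next
    case False
    define f1 where "f1 = (\<lambda>t. (1 + s t) * g (- t))"
    define f2 where "f2 = (\<lambda>t. (1 - s t) * g (- t))"
    have ms: "s \<in> borel_measurable lebesgue" unfolding s_def
      by (intro cont_meas continuous_intros)
    have L2g: "L2_real (\<lambda>t. g (- t))" by (rule L2_refl[OF assms(3)])
    have sb: "\<bar>s t\<bar> \<le> 1" for t unfolding s_def by simp
    have b1: "\<bar>1 + s t\<bar> \<le> 2" for t using sb[of t] unfolding abs_le_iff by linarith
    have b2: "\<bar>1 - s t\<bar> \<le> 2" for t using sb[of t] unfolding abs_le_iff by linarith
    have m1: "(\<lambda>t. 1 + s t) \<in> borel_measurable lebesgue" by (intro borel_measurable_add borel_measurable_const ms)
    have m2: "(\<lambda>t. 1 - s t) \<in> borel_measurable lebesgue" by (intro borel_measurable_diff borel_measurable_const ms)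
    have "L2_real f1" unfolding f1_def by (rule L2_bounded[OF L2g m1 b1])
    moreover have "L2_real f2" unfolding f2_def by (rule L2_bounded[OF L2g m2 b2])
    moreover have "cmod (stft (\<lambda>t. complex_of_real (g t)) (\<lambda>t. complex_of_real (f1 t)) (xpart (L *v k)) w)
               = cmod (stft (\<lambda>t. complex_of_real (g t)) (\<lambda>t. complex_of_real (f2 t)) (xpart (L *v k)) w)"
      if "\<forall>i. k $ i \<in> \<int>" for k w
    proof (rule stft_rel)
      show "f1 \<in> borel_measurable lebesgue" using \<open>L2_real f1\<close> by (simp add: L2_real_def)
      show "g \<in> borel_measurable lebesgue" by (rule mg)
      fix t
      show "f1 (xpart (L *v k) - t) * g (- t) = f2 t * g (t - xpart (L *v k))"
        using s_odd[OF xint[OF that], of t] unfolding f1_def f2_def by (simp add: algebra_simps)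
    qed
    moreover have "\<not> (\<exists>\<nu>::complex. cmod \<nu> = 1 \<and>
                 (AE t in lebesgue. complex_of_real (f1 t) = \<nu> * complex_of_real (f2 t)))"
    proof
      assume "\<exists>\<nu>::complex. cmod \<nu> = 1 \<and> (AE t in lebesgue. complex_of_real (f1 t) = \<nu> * complex_of_real (f2 t))"
      then obtain \<nu> :: complex where nu: "cmod \<nu> = 1"
        and ae: "AE t in lebesgue. complex_of_real (f1 t) = \<nu> * complex_of_real (f2 t)" by blast
      have "AE t in lebesgue. g (0 - t) = 0"
        using ae sin_AE[OF N(1), of i0]
      proof eventually_elim
        case (elim t)
        then have "g (- t) = 0 \<or> s t = 0"
          using pointwise[OF nu, of "s t" "g (- t)"] unfolding f1_def f2_def by simp
        then show ?case using elim(2) unfolding s_def by simp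
      qed
      then have "AE t in lebesgue. g t = 0" by (rule AE_refl[OF mg])
      with False show False by simp
    qed
    ultimately show ?thesis
      apply - apply (rule exI[of _ f1], rule exI[of _ f2]) by (simp add: Let_def)
  qed
qed

end
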